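(* Let $A$ be a self-adjoint operator on a complex separable Hilbert space $\mathbb{H}$, and let $G$ be a metric operator associated with $A$, i.e. $G$ is a metric operator such that $G^{1/2}AG^{-1/2}$ is self-adjoint. Then for every nonzero $\psi\in\mathbb{H}$, $$\langle A\rangle_{\psi,G}:=\frac{\langle\psi,G^{1/2}AG^{-1/2}\psi\rangle}{\|\psi\|^2}=\frac{\langle\psi,A\psi\rangle}{\|\psi\|^2}=:\langle A\rangle_\psi .$$
   Context: A metric operator is a bounded, strictly positive, self-adjoint operator with bounded inverse. The quantity $\langle A\rangle_{\psi,G}$ is defined when $G^{-1/2}\psi\in\mathcal{D}(A)$, and $\langle A\rangle_\psi$ when $\psi\in\mathcal{D}(A)$; the inner product is linear in the second argument. *)

theory Defs
  imports "HOL-Analysis.Analysis"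
begin

text \<open>The HOL library has no complex vector spaces, so we introduce complex inner product
  spaces as a type class.  A complex inner product space is in particular a real normed
  vector space (real scalar multiplication is the restriction of complex scalar multiplication),
  which gives access to the library's topology, limits and completeness.  The inner product
  is conjugate-linear in the first and linear in the second argument.\<close>

class complex_inner = real_normed_vector +
  fixes scaleC :: "complex \<Rightarrow> 'a \<Rightarrow> 'a" (infixr \<open>*\<^sub>C\<close> 75)
    and cinner :: "'a \<Rightarrow> 'a \<Rightarrow> complex"
  assumes scaleR_scaleC: "scaleR r x = complex_of_real r *\<^sub>C x"
    and scaleC_add_right: "a *\<^sub>C (x + y) = a *\<^sub>C x + a *\<^sub>C y"
    and scaleC_add_left: "(a + b) *\<^sub>C x = a *\<^sub>C x + b *\<^sub>C x"
    and scaleC_scaleC: "a *\<^sub>C (b *\<^sub>C x) = (a * b) *\<^sub>C x"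
    and scaleC_one: "1 *\<^sub>C x = x"
    and cinner_conj: "cinner x y = cnj (cinner y x)"
    and cinner_add_right: "cinner x (y + z) = cinner x y + cinner x z"
    and cinner_scaleC_right: "cinner x (a *\<^sub>C y) = a * cinner x y"
    and cinner_pos: "x \<noteq> 0 \<Longrightarrow> 0 < Re (cinner x x)"
    and norm_cinner: "norm x = sqrt (Re (cinner x x))"

class chilbert_space = complex_inner + complete_space

definition separable_space :: "'a::topological_space itself \<Rightarrow> bool" where
  "separable_space _ \<longleftrightarrow> (\<exists>S::'a set. countable S \<and> closure S = UNIV)"

definition csubspace :: "'a::complex_inner set \<Rightarrow> bool" where
  "csubspace S \<longleftrightarrow> 0 \<in> S \<and> (\<forall>x\<in>S. \<forall>y\<in>S. x + y \<in> S) \<and> (\<forall>c. \<forall>x\<in>S. c *\<^sub>C x \<in> S)"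

definition clinear_on :: "'a::complex_inner set \<Rightarrow> ('a \<Rightarrow> 'a) \<Rightarrow> bool" where
  "clinear_on S f \<longleftrightarrow> (\<forall>x\<in>S. \<forall>y\<in>S. f (x + y) = f x + f y) \<and> (\<forall>c. \<forall>x\<in>S. f (c *\<^sub>C x) = c *\<^sub>C f x)"

text \<open>An (in general unbounded) operator is given by its domain \<open>D\<close> and its action \<open>A\<close> on \<open>D\<close>.
  The domain of the adjoint \<open>A\<^sup>*\<close>:\<close>
definition adjoint_dom :: "'a::complex_inner set \<Rightarrow> ('a \<Rightarrow> 'a) \<Rightarrow> 'a set" where
  "adjoint_dom D A = {y. \<exists>z. \<forall>x\<in>D. cinner y (A x) = cinner z x}"

text \<open>Self-adjointness \<open>A = A\<^sup>*\<close> of a densely defined linear operator: \<open>A\<close> is symmetric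
  (so \<open>A \<subseteq> A\<^sup>*\<close>) and \<open>dom A\<^sup>* \<subseteq> dom A\<close>.\<close>
definition self_adjoint_op :: "'a::complex_inner set \<Rightarrow> ('a \<Rightarrow> 'a) \<Rightarrow> bool" where
  "self_adjoint_op D A \<longleftrightarrow> csubspace D \<and> clinear_on D A \<and> closure D = UNIV \<and>
     (\<forall>x\<in>D. \<forall>y\<in>D. cinner (A x) y = cinner x (A y)) \<and> adjoint_dom D A \<subseteq> D"

definition bounded_op :: "('a::complex_inner \<Rightarrow> 'a) \<Rightarrow> bool" where
  "bounded_op T \<longleftrightarrow> clinear_on UNIV T \<and> (\<exists>K. \<forall>x. norm (T x) \<le> K * norm x)"

definition bounded_self_adjoint :: "('a::complex_inner \<Rightarrow> 'a) \<Rightarrow> bool" where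
  "bounded_self_adjoint T \<longleftrightarrow> bounded_op T \<and> (\<forall>x y. cinner (T x) y = cinner x (T y))"

definition positive_op :: "('a::complex_inner \<Rightarrow> 'a) \<Rightarrow> bool" where
  "positive_op T \<longleftrightarrow> (\<forall>x. 0 \<le> Re (cinner x (T x)))"

definition strictly_positive_op :: "('a::complex_inner \<Rightarrow> 'a) \<Rightarrow> bool" where
  "strictly_positive_op T \<longleftrightarrow> (\<forall>x. x \<noteq> 0 \<longrightarrow> 0 < Re (cinner x (T x)))"

definition metric_operator :: "('a::complex_inner \<Rightarrow> 'a) \<Rightarrow> bool" where
  "metric_operator G \<longleftrightarrow> bounded_self_adjoint G \<and> strictly_positive_op G \<and>
     bij G \<and> bounded_op (inv G)"

definition op_sqrt :: "('a::complex_inner \<Rightarrow> 'a) \<Rightarrow> 'a \<Rightarrow> 'a" where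
  "op_sqrt G = (THE S. bounded_self_adjoint S \<and> positive_op S \<and> S \<circ> S = G)"

definition op_inv_sqrt :: "('a::complex_inner \<Rightarrow> 'a) \<Rightarrow> 'a \<Rightarrow> 'a" where
  "op_inv_sqrt G = inv (op_sqrt G)"

definition conj_dom :: "('a::complex_inner \<Rightarrow> 'a) \<Rightarrow> 'a set \<Rightarrow> 'a set" where
  "conj_dom G D = {x. op_inv_sqrt G x \<in> D}"

definition conj_op :: "('a::complex_inner \<Rightarrow> 'a) \<Rightarrow> ('a \<Rightarrow> 'a) \<Rightarrow> 'a \<Rightarrow> 'a" where
  "conj_op G A = (\<lambda>x. op_sqrt G (A (op_inv_sqrt G x)))"

end

theory Submission
  imports Defs "HOL-Computational_Algebra.Formal_Power_Series"
begin

context chilbert_space begin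
subclass banach ..
end

lemma cinner_add_left: "cinner (x + y) (z::'a::complex_inner) = cinner x z + cinner y z"
  by (metis cinner_conj cinner_add_right complex_cnj_add)

lemma cinner_scaleC_left: "cinner (c *\<^sub>C x) (y::'a::complex_inner) = cnj c * cinner x y"
  by (metis cinner_conj cinner_scaleC_right complex_cnj_mult complex_cnj_cnj)

lemma cinner_zero_right[simp]: "cinner (x::'a::complex_inner) 0 = 0"
  using cinner_add_right[of x 0 0] by simp

lemma cinner_zero_left[simp]: "cinner 0 (x::'a::complex_inner) = 0"
  using cinner_add_left[of 0 0 x] by simp

lemma cinner_minus_right: "cinner x (- y::'a::complex_inner) = - cinner x y"
  using cinner_add_right[of x y "-y"] by (metis neg_eq_iff_add_eq_0 cinner_zero_right add.right_inverse)

lemma cinner_minus_left: "cinner (- x) (y::'a::complex_inner) = - cinner x y"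
  using cinner_add_left[of x "-x" y] by (metis neg_eq_iff_add_eq_0 cinner_zero_left add.right_inverse)

lemma cinner_diff_right: "cinner x (y - z::'a::complex_inner) = cinner x y - cinner x z"
  using cinner_add_right[of x y "-z"] cinner_minus_right by simp

lemma cinner_diff_left: "cinner (x - y) (z::'a::complex_inner) = cinner x z - cinner y z"
  using cinner_add_left[of x "-y" z] cinner_minus_left by simp

lemma cinner_scaleR_right: "cinner x (r *\<^sub>R y::'a::complex_inner) = complex_of_real r * cinner x y"
  by (simp add: scaleR_scaleC cinner_scaleC_right)

lemma cinner_scaleR_left: "cinner (r *\<^sub>R x) (y::'a::complex_inner) = complex_of_real r * cinner x y"
  by (simp add: scaleR_scaleC cinner_scaleC_left)

lemma Re_cinner_sym: "Re (cinner x (y::'a::complex_inner)) = Re (cinner y x)"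
  by (subst cinner_conj) simp

lemma Im_cinner_self: "Im (cinner x (x::'a::complex_inner)) = 0"
  by (metis cinner_conj cnj.simps(2) neg_equal_zero)

lemma Re_cinner_self_ge0: "0 \<le> Re (cinner x (x::'a::complex_inner))"
  by (cases "x = 0") (auto intro: less_imp_le cinner_pos)

lemma norm_sq_cinner: "(norm x)\<^sup>2 = Re (cinner x (x::'a::complex_inner))"
  by (simp add: norm_cinner Re_cinner_self_ge0)

lemma cinner_self: "cinner x x = complex_of_real ((norm (x::'a::complex_inner))\<^sup>2)"
  by (simp add: norm_sq_cinner complex_eq_iff Im_cinner_self)

lemma cinner_self_eq0: "cinner x x = 0 \<longleftrightarrow> (x::'a::complex_inner) = 0"
  by (metis cinner_pos cinner_zero_right less_irrefl zero_complex.sel(1))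

lemma norm_scaleC: "norm (c *\<^sub>C x) = cmod c * norm (x::'a::complex_inner)"
proof -
  have "cinner (c *\<^sub>C x) (c *\<^sub>C x) = (c * cnj c) * cinner x x"
    by (simp add: cinner_scaleC_left cinner_scaleC_right mult.assoc mult.commute mult.left_commute)
  also have "\<dots> = complex_of_real ((cmod c * norm x)\<^sup>2)"
    by (simp add: cinner_self complex_norm_square[symmetric] power_mult_distrib)
  finally have "(norm (c *\<^sub>C x))\<^sup>2 = (cmod c * norm x)\<^sup>2"
    by (simp only: cinner_self of_real_eq_iff)
  then show ?thesis
    by (meson mult_nonneg_nonneg norm_ge_zero power2_eq_imp_eq)
qed

lemma scaleC_scaleR_comm: "c *\<^sub>C (r *\<^sub>R x) = r *\<^sub>R (c *\<^sub>C (x::'a::complex_inner))"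
  by (simp add: scaleR_scaleC scaleC_scaleC mult.commute)

lemma scaleC_zero[simp]: "c *\<^sub>C (0::'a::complex_inner) = 0"
  using scaleC_add_right[of c 0 0] by simp

lemma scaleC_minus: "c *\<^sub>C (- x) = - (c *\<^sub>C (x::'a::complex_inner))"
  using scaleC_add_right[of c x "-x"] by (metis neg_eq_iff_add_eq_0 scaleC_zero add.right_inverse)

lemma bounded_linear_scaleC: "bounded_linear (\<lambda>x::'a::complex_inner. c *\<^sub>C x)"
  by (rule bounded_linear_intro[where K="cmod c"])
    (auto simp: scaleC_add_right scaleC_scaleR_comm norm_scaleC mult.commute)

lemma quad_lemma:
  fixes A b B :: real
  assumes "\<And>t. 0 \<le> A + 2 * t * b + t\<^sup>2 * B" "0 \<le> B"
  shows "b\<^sup>2 \<le> A * B"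
proof (cases "B = 0")
  case True
  have "b = 0"
  proof (rule ccontr)
    assume "b \<noteq> 0"
    have "0 \<le> A + 2 * (- (A + 1) / (2 * b)) * b" using assms(1)[of "- (A + 1) / (2 * b)"] True by simp
    with \<open>b \<noteq> 0\<close> show False by (simp add: field_simps)
  qed
  then show ?thesis using True by simp
next
  case False
  then have Bp: "B > 0" using assms(2) by simp
  have "0 \<le> A + 2 * (- b / B) * b + (- b / B)\<^sup>2 * B" by (rule assms(1))
  also have "\<dots> = A - b\<^sup>2 / B" using Bp by (simp add: field_simps power2_eq_square)
  finally show ?thesis using Bp by (simp add: field_simps)
qed

lemma pos_cs:
  fixes P :: "'a::complex_inner \<Rightarrow> 'a"
  assumes lin: "linear P" and sym: "\<And>x y. cinner (P x) y = cinner x (P y)"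
    and pos: "\<And>x. 0 \<le> Re (cinner x (P x))"
  shows "(Re (cinner u (P v)))\<^sup>2 \<le> Re (cinner u (P u)) * Re (cinner v (P v))"
proof (rule quad_lemma)
  fix t :: real
  have "Re (cinner v (P u)) = Re (cinner u (P v))"
    by (metis Re_cinner_sym sym)
  then have "Re (cinner (u + t *\<^sub>R v) (P (u + t *\<^sub>R v))) = Re (cinner u (P u)) + 2 * t * Re (cinner u (P v)) + t\<^sup>2 * Re (cinner v (P v))"
    by (simp add: linear_add[OF lin] linear_scale[OF lin] cinner_add_left cinner_add_right
        cinner_scaleR_left cinner_scaleR_right power2_eq_square algebra_simps)
  then show "0 \<le> Re (cinner u (P u)) + 2 * t * Re (cinner u (P v)) + t\<^sup>2 * Re (cinner v (P v))"
    using pos by metis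
qed (rule pos)

lemma Re_cs: "(Re (cinner u v))\<^sup>2 \<le> (norm u)\<^sup>2 * (norm (v::'a::complex_inner))\<^sup>2"
  using pos_cs[of "id::'a\<Rightarrow>'a" u v] by (simp add: norm_sq_cinner Re_cinner_self_ge0 linear_id)

lemma cauchy_schwarz: "cmod (cinner u v) \<le> norm u * norm (v::'a::complex_inner)"
proof (cases "cinner u v = 0")
  case False
  let ?c = "cinner u v"
  have "cinner u (cnj ?c *\<^sub>C v) = complex_of_real ((cmod ?c)\<^sup>2)"
    by (metis complex_norm_square cinner_scaleC_right mult.commute)
  then have "((cmod ?c)\<^sup>2)\<^sup>2 \<le> (norm u)\<^sup>2 * (norm (cnj ?c *\<^sub>C v))\<^sup>2"
    using Re_cs[of u "cnj ?c *\<^sub>C v"] by simp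
  also have "\<dots> = (cmod ?c)\<^sup>2 * ((norm u)\<^sup>2 * (norm v)\<^sup>2)"
    by (simp add: norm_scaleC power_mult_distrib)
  finally have "(cmod ?c)\<^sup>2 * (cmod ?c)\<^sup>2 \<le> (cmod ?c)\<^sup>2 * ((norm u)\<^sup>2 * (norm v)\<^sup>2)"
    by (simp add: power2_eq_square)
  then have "(cmod ?c)\<^sup>2 \<le> (norm u)\<^sup>2 * (norm v)\<^sup>2"
    using False by (simp only: mult_le_cancel_left) (simp add: not_le)
  then have "(cmod ?c)\<^sup>2 \<le> (norm u * norm v)\<^sup>2"
    by (simp add: power_mult_distrib)
  then show ?thesis by (meson mult_nonneg_nonneg norm_ge_zero power2_le_imp_le)
qed simp

lemma bounded_linear_cinner_right: "bounded_linear (\<lambda>y. cinner (x::'a::complex_inner) y)"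
  by (rule bounded_linear_intro[where K="norm x"])
    (auto simp: cinner_add_right cinner_scaleR_right scaleR_conv_of_real intro: order_trans[OF cauchy_schwarz] simp: mult.commute)

lemma bounded_linear_cinner_left: "bounded_linear (\<lambda>y. cinner y (x::'a::complex_inner))"
  by (rule bounded_linear_intro[where K="norm x"])
    (auto simp: cinner_add_left cinner_scaleR_left scaleR_conv_of_real cauchy_schwarz)

definition acoef :: "nat \<Rightarrow> real" where
  "acoef n = ((1/2::real) gchoose n) * (-1) ^ n"

lemma acoef_0[simp]: "acoef 0 = 1"
  by (simp add: acoef_def)

lemma bsign: "0 \<le> (-1) ^ k * ((-1/2::real) gchoose k)"
proof -
  have "((-1/2::real) gchoose k) = (-1) ^ k * ((of_nat k - (-1/2) - 1) gchoose k)"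
    by (rule gbinomial_negated_upper)
  then have "(-1) ^ k * ((-1/2::real) gchoose k) = ((of_nat k - 1/2) gchoose k)"
    by (simp add: power_mult_distrib[symmetric] mult.assoc[symmetric])
  also have "\<dots> = (\<Prod>i = 0..<k. (of_nat k - 1/2) - of_nat i) / fact k"
    using gbinomial_mult_fact'[of "of_nat k - 1/2::real" k] by (simp add: field_simps)
  also have "\<dots> \<ge> 0"
    by (intro divide_nonneg_pos prod_nonneg) auto
  finally show ?thesis .
qed

lemma acoef_partial: "(\<Sum>k\<le>N. acoef k) = (-1) ^ N * ((-1/2::real) gchoose N)"
  using gbinomial_sum_lower_neg[of "1/2::real" N] by (simp add: acoef_def)

lemma acoef_partial_nonneg: "0 \<le> (\<Sum>k\<le>N. acoef k)"
  using acoef_partial bsign by simp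

lemma acoef_Suc: "acoef (Suc k) = - (1 / (2 * (real k + 1))) * ((-1) ^ k * ((-1/2::real) gchoose k))"
proof -
  have "of_nat (Suc k) * ((1/2::real) gchoose Suc k) = 1/2 * ((1/2 - 1) gchoose k)"
    by (rule gbinomial_absorption)
  then have "((1/2::real) gchoose Suc k) = 1/(2 * (real k + 1)) * ((-1/2) gchoose k)"
    by (simp add: field_simps)
  then show ?thesis by (simp add: acoef_def)
qed

lemma acoef_nonpos: "n \<ge> 1 \<Longrightarrow> acoef n \<le> 0"
proof -
  assume "n \<ge> 1"
  then obtain k where "n = Suc k" by (cases n) auto
  then show ?thesis using acoef_Suc[of k] bsign[of k]
    by (simp add: mult_nonneg_nonneg)
qed

lemma abs_acoef: "\<bar>acoef n\<bar> = (if n = 0 then acoef n else - acoef n)"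
  using acoef_nonpos[of n] by auto

lemma abs_acoef_partial: "(\<Sum>k<N. \<bar>acoef k\<bar>) \<le> 2"
proof (cases N)
  case 0 then show ?thesis by simp
next
  case (Suc M)
  have "(\<Sum>k<N. \<bar>acoef k\<bar>) = (\<Sum>k\<le>M. \<bar>acoef k\<bar>)"
    using Suc lessThan_Suc_atMost by simp
  also have "\<dots> = 2 - (\<Sum>k\<le>M. acoef k)"
  proof (induction M)
    case 0 then show ?case by simp
  next
    case (Suc M) then show ?case by (simp add: abs_acoef)
  qed
  also have "\<dots> \<le> 2" using acoef_partial_nonneg by simp
  finally show ?thesis .
qed

lemma summable_abs_acoef: "summable (\<lambda>n. \<bar>acoef n\<bar>)"
  by (rule summableI_nonneg_bounded[where x=2]) (auto intro: abs_acoef_partial)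

lemma summable_acoef: "summable acoef"
  using summable_abs_acoef summable_rabs_cancel by blast

lemma suminf_acoef_nonneg: "0 \<le> suminf acoef"
proof -
  have "(\<lambda>n. \<Sum>k<n. acoef k) \<longlonglongrightarrow> suminf acoef"
    using summable_LIMSEQ[OF summable_acoef] .
  moreover have "\<And>n. 0 \<le> (\<Sum>k<n. acoef k)"
  proof -
    fix n show "0 \<le> (\<Sum>k<n. acoef k)"
      by (cases n) (simp_all add: lessThan_Suc_atMost acoef_partial_nonneg)
  qed
  ultimately show ?thesis by (simp add: LIMSEQ_le_const)
qed

lemma acoef_conv: "(\<Sum>i\<le>k. acoef i * acoef (k - i)) = (if k = 0 then 1 else if k = 1 then -1 else 0)"
proof -
  have "(\<Sum>i\<le>k. acoef i * acoef (k - i)) = (-1) ^ k * (\<Sum>i\<le>k. ((1/2::real) gchoose i) * ((1/2) gchoose (k - i)))"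
    unfolding sum_distrib_left
  proof (rule sum.cong)
    fix i assume "i \<in> {..k}"
    then have "(-1::real) ^ i * (-1) ^ (k - i) = (-1) ^ k"
      by (simp add: power_add[symmetric])
    then show "acoef i * acoef (k - i) = (-1) ^ k * (((1/2::real) gchoose i) * ((1/2) gchoose (k - i)))"
      by (simp add: acoef_def algebra_simps)
  qed simp
  also have "(\<Sum>i\<le>k. ((1/2::real) gchoose i) * ((1/2) gchoose (k - i))) = (1/2 + 1/2) gchoose k"
    using gbinomial_Vandermonde[of "1/2::real" "1/2" k] by (simp add: atLeast0AtMost)
  also have "((1/2::real) + 1/2) gchoose k = of_nat (1 choose k)"
    by (simp add: binomial_gbinomial)
  finally show ?thesis
    by (cases k) (auto simp: binomial_eq_0)
qed

lemma bil_Cauchy_product_sums: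
  fixes a :: "nat \<Rightarrow> 'a::banach" and b :: "nat \<Rightarrow> 'b::banach"
    and prod :: "'a \<Rightarrow> 'b \<Rightarrow> 'c::banach"
  assumes bb: "bounded_bilinear prod"
    and a: "summable (\<lambda>k. norm (a k))"
    and b: "summable (\<lambda>k. norm (b k))"
  shows "(\<lambda>k. \<Sum>i\<le>k. prod (a i) (b (k - i))) sums (prod (\<Sum>k. a k) (\<Sum>k. b k))"
proof -
  obtain K where K: "K > 0" "\<And>x y. norm (prod x y) \<le> norm x * norm y * K"
    using bounded_bilinear.pos_bounded[OF bb] by blast
  let ?S1 = "\<lambda>n::nat. {..<n} \<times> {..<n}"
  let ?S2 = "\<lambda>n::nat. {(i,j). i + j < n}"
  have S1_mono: "\<And>m n. m \<le> n \<Longrightarrow> ?S1 m \<subseteq> ?S1 n" by auto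
  have S2_le_S1: "\<And>n. ?S2 n \<subseteq> ?S1 n" by auto
  have S1_le_S2: "\<And>n. ?S1 (n div 2) \<subseteq> ?S2 n" by auto
  have finite_S1: "\<And>n. finite (?S1 n)" by simp
  with S2_le_S1 have finite_S2: "\<And>n. finite (?S2 n)" by (rule finite_subset)

  let ?g = "\<lambda>(i,j). prod (a i) (b j)"
  let ?f = "\<lambda>(i,j). norm (a i) * norm (b j)"
  have f_nonneg: "\<And>x. 0 \<le> ?f x" by auto
  then have norm_sum_f: "\<And>A. norm (sum ?f A) = sum ?f A"
    unfolding real_norm_def
    by (simp only: abs_of_nonneg sum_nonneg [rule_format])

  have sp: "\<And>n. prod (\<Sum>k<n. a k) (\<Sum>k<n. b k) = sum ?g (?S1 n)"
    unfolding bounded_bilinear.sum_left[OF bb] unfolding bounded_bilinear.sum_right[OF bb] by (rule sum.cartesian_product)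
  have "(\<lambda>n. prod (\<Sum>k<n. a k) (\<Sum>k<n. b k)) \<longlonglongrightarrow> prod (\<Sum>k. a k) (\<Sum>k. b k)"
    by (intro bounded_bilinear.tendsto[OF bb] summable_LIMSEQ summable_norm_cancel [OF a] summable_norm_cancel [OF b])
  then have 1: "(\<lambda>n. sum ?g (?S1 n)) \<longlonglongrightarrow> prod (\<Sum>k. a k) (\<Sum>k. b k)"
    by (simp only: sp)

  have "(\<lambda>n. (\<Sum>k<n. norm (a k)) * (\<Sum>k<n. norm (b k))) \<longlonglongrightarrow> (\<Sum>k. norm (a k)) * (\<Sum>k. norm (b k))"
    using a b by (intro tendsto_mult summable_LIMSEQ)
  then have "(\<lambda>n. sum ?f (?S1 n)) \<longlonglongrightarrow> (\<Sum>k. norm (a k)) * (\<Sum>k. norm (b k))"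
    by (simp only: sum_product sum.Sigma [rule_format] finite_lessThan)
  then have "convergent (\<lambda>n. sum ?f (?S1 n))"
    by (rule convergentI)
  then have Cauchy: "Cauchy (\<lambda>n. sum ?f (?S1 n))"
    by (rule convergent_Cauchy)
  have Zf: "Zfun (\<lambda>n. sum ?f (?S1 n - ?S2 n)) sequentially"
  proof (rule ZfunI, simp only: eventually_sequentially norm_sum_f)
    fix r :: real
    assume r: "0 < r"
    from CauchyD [OF Cauchy r] obtain N
      where "\<forall>m\<ge>N. \<forall>n\<ge>N. norm (sum ?f (?S1 m) - sum ?f (?S1 n)) < r" ..
    then have "\<And>m n. N \<le> n \<Longrightarrow> n \<le> m \<Longrightarrow> norm (sum ?f (?S1 m - ?S1 n)) < r"
      by (simp only: sum_diff finite_S1 S1_mono)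
    then have N: "\<And>m n. N \<le> n \<Longrightarrow> n \<le> m \<Longrightarrow> sum ?f (?S1 m - ?S1 n) < r"
      by (simp only: norm_sum_f)
    show "\<exists>N. \<forall>n\<ge>N. sum ?f (?S1 n - ?S2 n) < r"
    proof (intro exI allI impI)
      fix n
      assume "2 * N \<le> n"
      then have n: "N \<le> n div 2" by simp
      have "sum ?f (?S1 n - ?S2 n) \<le> sum ?f (?S1 n - ?S1 (n div 2))"
        by (intro sum_mono2 finite_Diff finite_S1 f_nonneg Diff_mono subset_refl S1_le_S2)
      also have "\<dots> < r"
        using n div_le_dividend by (rule N)
      finally show "sum ?f (?S1 n - ?S2 n) < r" .
    qed
  qed
  then have "Zfun (\<lambda>n. sum ?f (?S1 n - ?S2 n) * K) sequentially"
    by (rule Zfun_mult_left)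
  then have "Zfun (\<lambda>n. sum ?g (?S1 n - ?S2 n)) sequentially"
  proof (rule Zfun_le, intro allI)
    fix n
    have "norm (sum ?g (?S1 n - ?S2 n)) \<le> sum (\<lambda>x. norm (?g x)) (?S1 n - ?S2 n)"
      by (rule norm_sum)
    also have "\<dots> \<le> sum (\<lambda>x. ?f x * K) (?S1 n - ?S2 n)"
      by (rule sum_mono) (auto intro: K(2))
    also have "\<dots> = sum ?f (?S1 n - ?S2 n) * K"
      by (simp add: sum_distrib_right)
    also have "\<dots> \<le> norm (sum ?f (?S1 n - ?S2 n) * K)"
      by simp
    finally show "norm (sum ?g (?S1 n - ?S2 n)) \<le> norm (sum ?f (?S1 n - ?S2 n) * K)" .
  qed
  then have 2: "(\<lambda>n. sum ?g (?S1 n) - sum ?g (?S2 n)) \<longlonglongrightarrow> 0"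
    unfolding tendsto_Zfun_iff diff_0_right
    by (simp only: sum_diff finite_S1 S2_le_S1)
  with 1 have "(\<lambda>n. sum ?g (?S2 n)) \<longlonglongrightarrow> prod (\<Sum>k. a k) (\<Sum>k. b k)"
    by (rule Lim_transform2)
  then show ?thesis
    by (simp only: sums_def sum.triangle_reindex)
qed

lemma scaleC_diff: "c *\<^sub>C (x - y) = c *\<^sub>C x - c *\<^sub>C (y::'a::complex_inner)"
  using scaleC_add_right[of c x "-y"] scaleC_minus[of c y] by simp

locale sqrt_setup =
  fixes G :: "'a::chilbert_space \<Rightarrow> 'a" and M :: real
  assumes Glin: "linear G"
    and GscC: "\<And>c x. G (c *\<^sub>C x) = c *\<^sub>C G x"
    and Gbound: "\<And>x. norm (G x) \<le> M * norm x"
    and Mpos: "M > 0"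
    and Gsym: "\<And>x y. cinner (G x) y = cinner x (G y)"
    and Gpos: "\<And>x. 0 \<le> Re (cinner x (G x))"
begin

definition X :: "'a \<Rightarrow> 'a" where "X x = x - (1/M) *\<^sub>R G x"

lemma Gbl: "bounded_linear G"
  using Glin Gbound by (auto simp: bounded_linear_def bounded_linear_axioms_def intro!: exI[of _ M] simp: mult.commute)

lemma Xlin: "linear X"
  by (rule linearI) (simp_all add: X_def linear_add[OF Glin] linear_scale[OF Glin] algebra_simps)

lemma X_add: "X (x + y) = X x + X y" by (rule linear_add[OF Xlin])
lemma X_scaleR: "X (r *\<^sub>R x) = r *\<^sub>R X x" by (rule linear_scale[OF Xlin])

lemma X_scaleC: "X (c *\<^sub>C x) = c *\<^sub>C X x"
  by (simp add: X_def GscC scaleC_diff scaleC_scaleR_comm)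

lemma Xsym: "cinner (X x) y = cinner x (X y)"
  by (simp add: X_def cinner_diff_left cinner_diff_right cinner_scaleR_left cinner_scaleR_right Gsym)

lemma GG_bound: "(norm (G x))\<^sup>2 \<le> M * Re (cinner x (G x))"
proof (cases "G x = 0")
  case False
  have "(Re (cinner (G x) (G x)))\<^sup>2 \<le> Re (cinner (G x) (G (G x))) * Re (cinner x (G x))"
    using pos_cs[OF Glin Gsym Gpos, of "G x" x] .
  also have "Re (cinner (G x) (G (G x))) \<le> M * (norm (G x))\<^sup>2"
  proof -
    have "Re (cinner (G x) (G (G x))) \<le> cmod (cinner (G x) (G (G x)))" by (rule complex_Re_le_cmod)
    also have "\<dots> \<le> norm (G x) * norm (G (G x))" by (rule cauchy_schwarz)
    also have "\<dots> \<le> norm (G x) * (M * norm (G x))" by (intro mult_left_mono Gbound) simp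
    finally show ?thesis by (simp add: power2_eq_square algebra_simps)
  qed
  finally have "(norm (G x))\<^sup>2 * (norm (G x))\<^sup>2 \<le> (norm (G x))\<^sup>2 * (M * Re (cinner x (G x)))"
    using Gpos[of x] by (simp add: norm_sq_cinner[symmetric] power2_eq_square mult_right_mono algebra_simps)
  moreover have "(norm (G x))\<^sup>2 > 0" using False by simp
  ultimately show ?thesis by (simp only: mult_le_cancel_left_pos)
qed (simp add: Gpos Mpos)

lemma X_norm: "norm (X x) \<le> norm x"
proof -
  let ?s = "1/M" and ?R = "Re (cinner x (G x))"
  have "(norm (X x))\<^sup>2 = (norm x)\<^sup>2 - 2 * ?s * ?R + ?s\<^sup>2 * (norm (G x))\<^sup>2"
    unfolding X_def norm_sq_cinner
    using Re_cinner_sym[of "G x" x]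
    by (simp add: cinner_diff_left cinner_diff_right cinner_scaleR_left cinner_scaleR_right power2_eq_square algebra_simps)
  also have "\<dots> \<le> (norm x)\<^sup>2 - 2 * ?s * ?R + ?s\<^sup>2 * (M * ?R)"
    using GG_bound[of x] Mpos by (intro add_left_mono mult_left_mono) auto
  also have "\<dots> = (norm x)\<^sup>2 - ?s * ?R"
    using Mpos by (simp add: power2_eq_square field_simps)
  also have "\<dots> \<le> (norm x)\<^sup>2"
    using Gpos[of x] Mpos by simp
  finally show ?thesis by (simp add: power2_le_iff_abs_le)
qed

lemma Xbl: "bounded_linear X"
  using Xlin X_norm by (auto simp: bounded_linear_def bounded_linear_axioms_def intro!: exI[of _ 1])

lemma Xn_bl: "bounded_linear (X ^^ n)"
  by (induction n) (auto intro: bounded_linear_compose[OF Xbl] bounded_linear_ident)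

lemma Xn_norm: "norm ((X ^^ n) x) \<le> norm x"
  by (induction n) (auto intro: order_trans[OF X_norm])

lemma Xn_sym: "cinner ((X ^^ n) x) y = cinner x ((X ^^ n) y)"
  by (induction n arbitrary: x y) (auto simp: Xsym funpow_swap1)

definition pw :: "nat \<Rightarrow> 'a \<Rightarrow>\<^sub>L 'a" where "pw n = Blinfun (X ^^ n)"

lemma pw_apply[simp]: "blinfun_apply (pw n) = X ^^ n"
  unfolding pw_def by (rule bounded_linear_Blinfun_apply[OF Xn_bl])

lemma pw_norm: "norm (pw n) \<le> 1"
  by (rule norm_blinfun_bound) (auto intro: Xn_norm)

lemma summable_pw: "summable (\<lambda>n. norm (acoef n *\<^sub>R pw n))"
proof (rule summable_comparison_test[OF _ summable_abs_acoef], intro exI allI impI)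
  fix n show "norm (norm (acoef n *\<^sub>R pw n)) \<le> \<bar>acoef n\<bar>"
    using pw_norm[of n] by (simp add: mult_left_le)
qed

definition S0b :: "'a \<Rightarrow>\<^sub>L 'a" where "S0b = (\<Sum>n. acoef n *\<^sub>R pw n)"
definition S0 :: "'a \<Rightarrow> 'a" where "S0 x = blinfun_apply S0b x"

lemma summable_Xn: "summable (\<lambda>n. acoef n *\<^sub>R (X ^^ n) x)"
  using bounded_linear.summable[OF blinfun.bounded_linear_left, OF summable_norm_cancel[OF summable_pw], of x]
  by (simp add: blinfun.scaleR_left)

lemma S0_series: "S0 x = (\<Sum>n. acoef n *\<^sub>R (X ^^ n) x)"
  unfolding S0_def S0b_def
  using bounded_linear.suminf[OF blinfun.bounded_linear_left, OF summable_norm_cancel[OF summable_pw], of x]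
  by (simp add: blinfun.scaleR_left)

lemma S0_bl: "bounded_linear S0"
  unfolding S0_def by (rule blinfun.bounded_linear_right)

lemma S0_S0: "S0 (S0 x) = x - X x"
proof -
  let ?c = "\<lambda>k. (\<Sum>i\<le>k. acoef i * acoef (k - i)) *\<^sub>R pw k"
  have "(\<lambda>k. \<Sum>i\<le>k. (acoef i *\<^sub>R pw i) o\<^sub>L (acoef (k - i) *\<^sub>R pw (k - i))) sums (S0b o\<^sub>L S0b)"
    unfolding S0b_def by (rule bil_Cauchy_product_sums[OF bounded_bilinear_blinfun_compose summable_pw summable_pw])
  moreover have "(\<Sum>i\<le>k. (acoef i *\<^sub>R pw i) o\<^sub>L (acoef (k - i) *\<^sub>R pw (k - i))) = ?c k" for k
  proof -
    have "(acoef i *\<^sub>R pw i) o\<^sub>L (acoef (k - i) *\<^sub>R pw (k - i)) = (acoef i * acoef (k - i)) *\<^sub>R pw k"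
      if "i \<le> k" for i
    proof (rule blinfun_eqI)
      fix y
      have "(X ^^ i) ((X ^^ (k - i)) y) = (X ^^ k) y"
        using that by (metis funpow_add le_add_diff_inverse o_apply)
      then show "blinfun_apply ((acoef i *\<^sub>R pw i) o\<^sub>L (acoef (k - i) *\<^sub>R pw (k - i))) y = blinfun_apply ((acoef i * acoef (k - i)) *\<^sub>R pw k) y"
        by (simp add: blinfun.scaleR_left linear_scale[OF bounded_linear.linear[OF Xn_bl]])
    qed
    then show ?thesis by (simp add: scaleR_sum_left)
  qed
  ultimately have "?c sums (S0b o\<^sub>L S0b)" by simp
  moreover have "?c sums (\<Sum>k\<in>{0,1}. ?c k)"
    by (rule sums_finite) (auto simp: acoef_conv)
  ultimately have "S0b o\<^sub>L S0b = (\<Sum>k\<in>{0,1}. ?c k)" using sums_unique2 by blast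
  then have "blinfun_apply (S0b o\<^sub>L S0b) x = blinfun_apply (\<Sum>k\<in>{0,1}. ?c k) x" by simp
  then show ?thesis
    by (simp add: S0_def acoef_conv blinfun.scaleR_left blinfun.sum_left blinfun.diff_left)
qed


lemma Xn_comm:
  assumes "linear R" "\<And>x. R (X x) = X (R x)"
  shows "R ((X ^^ n) x) = (X ^^ n) (R x)"
  using assms by (induction n) auto

lemma S0_comm:
  assumes "bounded_linear R" "\<And>x. R (X x) = X (R x)"
  shows "R (S0 x) = S0 (R x)"
proof -
  have "R (S0 x) = (\<Sum>n. R (acoef n *\<^sub>R (X ^^ n) x))"
    unfolding S0_series by (rule bounded_linear.suminf[OF assms(1) summable_Xn])
  also have "\<dots> = (\<Sum>n. acoef n *\<^sub>R (X ^^ n) (R x))"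
    using Xn_comm[OF bounded_linear.linear[OF assms(1)] assms(2)]
    by (simp add: linear_scale[OF bounded_linear.linear[OF assms(1)]])
  finally show ?thesis by (simp add: S0_series)
qed

lemma S0_scaleC: "S0 (c *\<^sub>C x) = c *\<^sub>C S0 x"
  using S0_comm[of "\<lambda>x. c *\<^sub>C x", OF bounded_linear_scaleC X_scaleC[symmetric]] by simp

lemma summable_cinner_Xn: "summable (\<lambda>n. cinner y (acoef n *\<^sub>R (X ^^ n) x))"
  by (rule bounded_linear.summable[OF bounded_linear_cinner_right summable_Xn])

lemma cinner_S0_right: "cinner y (S0 x) = (\<Sum>n. cinner y (acoef n *\<^sub>R (X ^^ n) x))"
  unfolding S0_series by (rule bounded_linear.suminf[OF bounded_linear_cinner_right summable_Xn])

lemma cinner_S0_left: "cinner (S0 x) y = (\<Sum>n. cinner (acoef n *\<^sub>R (X ^^ n) x) y)"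
  unfolding S0_series by (rule bounded_linear.suminf[OF bounded_linear_cinner_left summable_Xn])

lemma S0_sym: "cinner (S0 x) y = cinner x (S0 y)"
  unfolding cinner_S0_left cinner_S0_right
  by (simp add: cinner_scaleR_left cinner_scaleR_right Xn_sym)

lemma S0_pos: "0 \<le> Re (cinner x (S0 x))"
proof -
  have "Re (cinner x (S0 x)) = (\<Sum>n. Re (cinner x (acoef n *\<^sub>R (X ^^ n) x)))"
    unfolding cinner_S0_right by (rule bounded_linear.suminf[OF bounded_linear_Re summable_cinner_Xn])
  also have "\<dots> = (\<Sum>n. acoef n * Re (cinner x ((X ^^ n) x)))"
    by (simp add: cinner_scaleR_right)
  finally have eq: "Re (cinner x (S0 x)) = (\<Sum>n. acoef n * Re (cinner x ((X ^^ n) x)))" .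
  have sm: "summable (\<lambda>n. acoef n * Re (cinner x ((X ^^ n) x)))"
    using bounded_linear.summable[OF bounded_linear_Re summable_cinner_Xn[of x x]]
    by (simp add: cinner_scaleR_right)
  have le: "acoef n * (norm x)\<^sup>2 \<le> acoef n * Re (cinner x ((X ^^ n) x))" for n
  proof (cases "n = 0")
    case True then show ?thesis by (simp add: norm_sq_cinner)
  next
    case False
    have "Re (cinner x ((X ^^ n) x)) \<le> cmod (cinner x ((X ^^ n) x))" by (rule complex_Re_le_cmod)
    also have "\<dots> \<le> norm x * norm ((X ^^ n) x)" by (rule cauchy_schwarz)
    also have "\<dots> \<le> norm x * norm x" by (intro mult_left_mono Xn_norm) simp
    finally have "Re (cinner x ((X ^^ n) x)) \<le> (norm x)\<^sup>2" by (simp add: power2_eq_square)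
    moreover have "acoef n \<le> 0" using False acoef_nonpos by simp
    ultimately show ?thesis by (simp add: mult_left_mono_neg)
  qed
  have "0 \<le> suminf acoef * (norm x)\<^sup>2" using suminf_acoef_nonneg by simp
  also have "\<dots> = (\<Sum>n. acoef n * (norm x)\<^sup>2)"
    by (rule suminf_mult2[OF summable_acoef])
  also have "\<dots> \<le> (\<Sum>n. acoef n * Re (cinner x ((X ^^ n) x)))"
    by (rule suminf_le[OF le summable_mult2[OF summable_acoef] sm])
  finally show ?thesis using eq by simp
qed

definition Sq :: "'a \<Rightarrow> 'a" where "Sq x = sqrt M *\<^sub>R S0 x"

lemma Sq_bl: "bounded_linear Sq"
  unfolding Sq_def using bounded_linear_compose[OF bounded_linear_scaleR_right S0_bl] by (simp add: o_def)

lemma Sq_scaleC: "Sq (c *\<^sub>C x) = c *\<^sub>C Sq x"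
  by (simp add: Sq_def S0_scaleC scaleC_scaleR_comm)

lemma Sq_Sq: "Sq (Sq x) = G x"
proof -
  have "Sq (Sq x) = (sqrt M * sqrt M) *\<^sub>R S0 (S0 x)"
    by (simp add: Sq_def linear_scale[OF bounded_linear.linear[OF S0_bl]])
  also have "\<dots> = M *\<^sub>R (x - X x)" using Mpos by (simp add: S0_S0)
  also have "\<dots> = G x" using Mpos by (simp add: X_def)
  finally show ?thesis .
qed

lemma Sq_sym: "cinner (Sq x) y = cinner x (Sq y)"
  by (simp add: Sq_def cinner_scaleR_left cinner_scaleR_right S0_sym)

lemma Sq_pos: "0 \<le> Re (cinner x (Sq x))"
  using S0_pos[of x] Mpos by (simp add: Sq_def cinner_scaleR_right)

lemma Sq_comm:
  assumes "bounded_linear R" "\<And>x. R (G x) = G (R x)"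
  shows "R (Sq x) = Sq (R x)"
proof -
  have "R (X x) = X (R x)" for x
    using assms(2)[of x] by (simp add: X_def linear_diff[OF bounded_linear.linear[OF assms(1)]]
        linear_scale[OF bounded_linear.linear[OF assms(1)]])
  then show ?thesis
    using S0_comm[OF assms(1)] by (simp add: Sq_def linear_scale[OF bounded_linear.linear[OF assms(1)]])
qed

end

lemma pos_zero:
  fixes P :: "'a::complex_inner \<Rightarrow> 'a"
  assumes lin: "linear P" and sym: "\<And>x y. cinner (P x) y = cinner x (P y)"
    and pos: "\<And>x. 0 \<le> Re (cinner x (P x))"
    and z: "Re (cinner y (P y)) = 0"
  shows "P y = 0"
proof -
  have "(Re (cinner (P y) (P y)))\<^sup>2 \<le> Re (cinner (P y) (P (P y))) * Re (cinner y (P y))"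
    by (rule pos_cs[OF lin sym pos])
  then have "((norm (P y))\<^sup>2)\<^sup>2 \<le> 0" using z by (simp add: norm_sq_cinner)
  then show ?thesis by simp
qed

context sqrt_setup begin

lemma Sq_unique:
  assumes Rbl: "bounded_linear R" and Rsym: "\<And>x y. cinner (R x) y = cinner x (R y)"
    and Rpos: "\<And>x. 0 \<le> Re (cinner x (R x))" and RR: "\<And>x. R (R x) = G x"
  shows "R x = Sq x"
proof -
  have Rlin: "linear R" using Rbl by (rule bounded_linear.linear)
  have Sqlin: "linear Sq" using Sq_bl by (rule bounded_linear.linear)
  have comm: "R (Sq z) = Sq (R z)" for z
    by (rule Sq_comm[OF Rbl]) (metis RR)
  let ?y = "Sq x - R x"
  have "Sq ?y + R ?y = 0"
    using comm[of x] by (simp add: linear_diff[OF Sqlin] linear_diff[OF Rlin] Sq_Sq RR)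
  then have "Re (cinner ?y (Sq ?y)) + Re (cinner ?y (R ?y)) = 0"
    by (metis cinner_add_right cinner_zero_right plus_complex.sel(1) zero_complex.sel(1))
  then have z1: "Re (cinner ?y (Sq ?y)) = 0" and z2: "Re (cinner ?y (R ?y)) = 0"
    using Sq_pos[of ?y] Rpos[of ?y] by linarith+
  have "Sq ?y = 0" by (rule pos_zero[OF Sqlin Sq_sym Sq_pos z1])
  moreover have "R ?y = 0" by (rule pos_zero[OF Rlin Rsym Rpos z2])
  ultimately have "(norm ?y)\<^sup>2 = 0"
    unfolding norm_sq_cinner cinner_diff_right
    by (simp add: Sq_sym[symmetric] Rsym[symmetric])
  then show ?thesis by simp
qed

end

lemma bounded_op_bl:
  assumes "bounded_op (T::'a::complex_inner \<Rightarrow> 'a)"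
  shows "bounded_linear T" "\<And>c x. T (c *\<^sub>C x) = c *\<^sub>C T x" "\<And>x y. T (x + y) = T x + T y"
proof -
  from assms obtain K where K: "\<And>x. norm (T x) \<le> K * norm x"
    and add: "\<And>x y. T (x + y) = T x + T y" and sc: "\<And>c x. T (c *\<^sub>C x) = c *\<^sub>C T x"
    unfolding bounded_op_def clinear_on_def by auto
  show "bounded_linear T"
  proof (rule bounded_linear_intro[where K=K])
    show "T (x + y) = T x + T y" for x y by (rule add)
    show "T (r *\<^sub>R x) = r *\<^sub>R T x" for r x
      unfolding scaleR_scaleC by (rule sc)
    show "norm (T x) \<le> norm x * K" for x using K[of x] by (simp only: mult.commute)
  qed
  show "\<And>c x. T (c *\<^sub>C x) = c *\<^sub>C T x" by (rule sc)
  show "\<And>x y. T (x + y) = T x + T y" by (rule add)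
qed

lemma density_zero:
  fixes D :: "'a::complex_inner set"
  assumes "closure D = UNIV" "\<And>v. v \<in> D \<Longrightarrow> cinner w v = 0"
  shows "w = 0"
proof -
  have "w \<in> closure D" using assms(1) by simp
  then have "\<exists>f. (\<forall>n. f n \<in> D) \<and> f \<longlonglongrightarrow> w" by (simp only: closure_sequential)
  then obtain f where f1: "\<And>n. f n \<in> D" and f2: "f \<longlonglongrightarrow> w" by blast
  have lim: "(\<lambda>n. cinner w (f n)) \<longlonglongrightarrow> cinner w w"
    by (rule bounded_linear.tendsto[OF bounded_linear_cinner_right f2])
  have "(\<lambda>n. cinner w (f n)) = (\<lambda>n. 0)" by (rule ext) (rule assms(2)[OF f1])
  with lim have "(\<lambda>n. 0::complex) \<longlonglongrightarrow> cinner w w" by simp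
  then have "cinner w w = 0" using LIMSEQ_unique[OF _ tendsto_const] by metis
  then show ?thesis by (simp add: cinner_self_eq0)
qed

lemma scaleC_minus_one: "(-1) *\<^sub>C y = - (y::'a::complex_inner)"
proof -
  have z: "0 *\<^sub>C y = 0" using scaleC_add_left[of 0 0 y] by simp
  have "y + (-1) *\<^sub>C y = 0" using scaleC_add_left[of 1 "-1" y] by (simp add: scaleC_one z)
  then have "- y = (-1) *\<^sub>C y" by (simp only: neg_eq_iff_add_eq_0)
  then show ?thesis by (rule sym)
qed

lemma csubspace_diff: "csubspace D \<Longrightarrow> x \<in> D \<Longrightarrow> y \<in> D \<Longrightarrow> x - y \<in> D"
proof -
  assume D: "csubspace D" "x \<in> D" "y \<in> D"
  then have "(-1) *\<^sub>C y \<in> D" unfolding csubspace_def by blast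
  then have "x + (-1) *\<^sub>C y \<in> D" using D unfolding csubspace_def by blast
  then show ?thesis by (simp only: scaleC_minus_one diff_conv_add_uminus)
qed

lemma csubspace_scaleR: "csubspace D \<Longrightarrow> x \<in> D \<Longrightarrow> r *\<^sub>R x \<in> D"
  unfolding csubspace_def by (simp add: scaleR_scaleC)

lemma clinear_on_diff: "clinear_on D A \<Longrightarrow> csubspace D \<Longrightarrow> x \<in> D \<Longrightarrow> y \<in> D \<Longrightarrow> A (x - y) = A x - A y"
proof -
  assume A: "clinear_on D A" and D: "csubspace D" and xy: "x \<in> D" "y \<in> D"
  then have "(-1) *\<^sub>C y \<in> D" unfolding csubspace_def by blast
  then have "A (x + (-1) *\<^sub>C y) = A x + A ((-1) *\<^sub>C y)" using A xy unfolding clinear_on_def by blast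
  also have "A ((-1) *\<^sub>C y) = (-1) *\<^sub>C A y" using A xy unfolding clinear_on_def by blast
  finally show ?thesis by (simp only: scaleC_minus_one diff_conv_add_uminus)
qed

lemma clinear_on_scaleR: "clinear_on D A \<Longrightarrow> x \<in> D \<Longrightarrow> A (r *\<^sub>R x) = r *\<^sub>R A x"
  unfolding clinear_on_def by (simp add: scaleR_scaleC)

theorem proposition3p3:
  fixes D :: "'a::chilbert_space set" and A :: "'a \<Rightarrow> 'a" and G :: "'a \<Rightarrow> 'a" and \<psi> :: 'a
  assumes "separable_space TYPE('a)"
    and "self_adjoint_op D A"
    and "metric_operator G"
    and "self_adjoint_op (conj_dom G D) (conj_op G A)"
    and "\<psi> \<noteq> 0"
  shows "(\<psi> \<in> conj_dom G D \<longleftrightarrow> \<psi> \<in> D) \<and>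
    (\<psi> \<in> D \<longrightarrow>
      cinner \<psi> (conj_op G A \<psi>) / complex_of_real ((norm \<psi>)\<^sup>2)
        = cinner \<psi> (A \<psi>) / complex_of_real ((norm \<psi>)\<^sup>2))"
proof -
  from assms(2) have Dsub: "csubspace D" and Alin: "clinear_on D A" and Ddense: "closure D = UNIV"
    and Asym: "\<And>x y. x \<in> D \<Longrightarrow> y \<in> D \<Longrightarrow> cinner (A x) y = cinner x (A y)"
    and Aadj: "adjoint_dom D A \<subseteq> D"
    unfolding self_adjoint_op_def by auto
  from assms(3) have Gb: "bounded_op G" and Gsym: "\<And>x y. cinner (G x) y = cinner x (G y)"
    and Gspos: "strictly_positive_op G" and Gbij: "bij G"
    unfolding metric_operator_def bounded_self_adjoint_def by auto
  obtain K where K: "\<And>x. norm (G x) \<le> K * norm x" using Gb unfolding bounded_op_def by auto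
  define M where "M = \<bar>K\<bar> + 1"
  have Mpos: "M > 0" unfolding M_def by simp
  have GM: "norm (G x) \<le> M * norm x" for x
  proof -
    have "K * norm x \<le> M * norm x" unfolding M_def by (intro mult_right_mono) auto
    then show ?thesis using K[of x] by linarith
  qed
  have Gpos: "0 \<le> Re (cinner x (G x))" for x
    using Gspos unfolding strictly_positive_op_def by (cases "x = 0") (auto intro: less_imp_le)
  have "sqrt_setup G M"
    by (rule sqrt_setup.intro[OF bounded_linear.linear[OF bounded_op_bl(1)[OF Gb]] bounded_op_bl(2)[OF Gb] GM Mpos Gsym Gpos])
  then interpret sq: sqrt_setup G M .
  let ?S = "sq.Sq"
  have Sbo: "bounded_op ?S"
  proof -
    obtain L where L: "\<And>x. norm (?S x) \<le> norm x * L" using bounded_linear.bounded[OF sq.Sq_bl] by blast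
    show ?thesis unfolding bounded_op_def clinear_on_def
      using linear_add[OF bounded_linear.linear[OF sq.Sq_bl]] sq.Sq_scaleC L
      by (auto intro!: exI[of _ L] simp: mult.commute)
  qed
  have sqrt_eq: "op_sqrt G = ?S"
    unfolding op_sqrt_def
  proof (rule the_equality)
    show "bounded_self_adjoint ?S \<and> positive_op ?S \<and> ?S \<circ> ?S = G"
      using Sbo sq.Sq_sym sq.Sq_pos sq.Sq_Sq
      by (auto simp: bounded_self_adjoint_def positive_op_def)
  next
    fix R assume R: "bounded_self_adjoint R \<and> positive_op R \<and> R \<circ> R = G"
    show "R = ?S"
    proof
      fix x
      have Rb: "bounded_op R" and Rs: "\<And>x y. cinner (R x) y = cinner x (R y)"
        and Rp: "\<And>x. 0 \<le> Re (cinner x (R x))" and RR: "R \<circ> R = G"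
        using R by (auto simp: bounded_self_adjoint_def positive_op_def)
      have RR': "R (R z) = G z" for z using RR by (metis comp_apply)
      show "R x = ?S x"
        by (rule sq.Sq_unique[OF bounded_op_bl(1)[OF Rb] Rs Rp RR'])
    qed
  qed
  define Si where "Si = inv ?S"
  have inv_eq: "op_inv_sqrt G = Si" unfolding op_inv_sqrt_def Si_def sqrt_eq ..
  have Sinj: "inj ?S"
  proof (rule injI)
    fix x y assume "?S x = ?S y"
    then have "G x = G y" by (metis sq.Sq_Sq)
    then show "x = y" using Gbij by (simp add: bij_def inj_eq)
  qed
  have Ssurj: "surj ?S"
  proof -
    have "z \<in> range ?S" for z
    proof -
      obtain y where "G y = z" using Gbij by (metis bij_def surjD)
      then show ?thesis by (metis sq.Sq_Sq rangeI)
    qed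
    then show ?thesis by blast
  qed
  have SSi: "?S (Si x) = x" for x unfolding Si_def by (rule surj_f_inv_f[OF Ssurj])
  have SiS: "Si (?S x) = x" for x unfolding Si_def by (rule inv_f_f[OF Sinj])
  have Sisym: "cinner (Si a) b = cinner a (Si b)" for a b
  proof -
    have "cinner (Si a) b = cinner (Si a) (?S (Si b))" by (simp only: SSi)
    also have "\<dots> = cinner (?S (Si a)) (Si b)" by (simp only: sq.Sq_sym)
    finally show ?thesis by (simp only: SSi)
  qed
  have DB: "conj_dom G D = {x. Si x \<in> D}" unfolding conj_dom_def inv_eq ..
  have B: "conj_op G A = (\<lambda>x. ?S (A (Si x)))" unfolding conj_op_def inv_eq sqrt_eq ..
  from assms(4) have Bsym: "\<And>x y. Si x \<in> D \<Longrightarrow> Si y \<in> D \<Longrightarrow> cinner (?S (A (Si x))) y = cinner x (?S (A (Si y)))"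
    and Badj: "adjoint_dom {x. Si x \<in> D} (\<lambda>x. ?S (A (Si x))) \<subseteq> {x. Si x \<in> D}"
    unfolding self_adjoint_op_def DB B by auto
  have GD: "G w \<in> D \<and> A (G w) = G (A w)" if w: "w \<in> D" for w
  proof -
    have key: "cinner (A v) (G w) = cinner (G v) (A w)" if v: "v \<in> D" for v
    proof -
      have "cinner (?S (A (Si (?S v)))) (?S w) = cinner (?S v) (?S (A (Si (?S w))))"
        using Bsym[of "?S v" "?S w"] v w by (simp add: SiS)
      then show ?thesis by (simp add: SiS sq.Sq_sym sq.Sq_Sq Gsym)
    qed
    have adj: "cinner (G w) (A v) = cinner (G (A w)) v" if v: "v \<in> D" for v
    proof -
      have "cinner (G w) (A v) = cnj (cinner (A v) (G w))" by (rule cinner_conj)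
      also have "\<dots> = cnj (cinner (G v) (A w))" using key[OF v] by simp
      also have "\<dots> = cinner (A w) (G v)" by (metis cinner_conj)
      also have "\<dots> = cinner (G (A w)) v" by (simp add: Gsym)
      finally show ?thesis .
    qed
    then have "G w \<in> adjoint_dom D A" unfolding adjoint_dom_def by blast
    then have GwD: "G w \<in> D" using Aadj by blast
    have "A (G w) - G (A w) = 0"
    proof (rule density_zero[OF Ddense])
      fix v assume v: "v \<in> D"
      show "cinner (A (G w) - G (A w)) v = 0"
        using Asym[OF GwD v] adj[OF v] by (simp add: cinner_diff_left)
    qed
    then show ?thesis using GwD by simp
  qed
  have SiD: "Si y \<in> D" if Sy: "?S y \<in> D" for y
  proof -
    have "cinner y (?S (A (Si x))) = cinner (Si (A (?S y))) x" if x: "Si x \<in> D" for x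
    proof -
      have "cinner y (?S (A (Si x))) = cinner (?S y) (A (Si x))" by (simp add: sq.Sq_sym)
      also have "\<dots> = cinner (A (?S y)) (Si x)" using Asym[OF Sy x] by simp
      also have "\<dots> = cinner (Si (A (?S y))) x" by (simp add: Sisym)
      finally show ?thesis .
    qed
    then have "y \<in> adjoint_dom {x. Si x \<in> D} (\<lambda>x. ?S (A (Si x)))"
      unfolding adjoint_dom_def by blast
    then show ?thesis using Badj by blast
  qed
  have XD: "sq.X v \<in> D \<and> A (sq.X v) = sq.X (A v)" if v: "v \<in> D" for v
  proof -
    have GvD: "G v \<in> D" using GD[OF v] by simp
    have "sq.X v \<in> D" unfolding sq.X_def
      by (intro csubspace_diff[OF Dsub] csubspace_scaleR[OF Dsub] v GvD)
    moreover have "A (sq.X v) = sq.X (A v)" unfolding sq.X_def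
      using GD[OF v] by (simp add: clinear_on_diff[OF Alin Dsub v csubspace_scaleR[OF Dsub GvD]]
          clinear_on_scaleR[OF Alin GvD])
    ultimately show ?thesis by simp
  qed
  have XnD: "(sq.X ^^ n) v \<in> D \<and> A ((sq.X ^^ n) v) = (sq.X ^^ n) (A v)" if v: "v \<in> D" for v n
    using v by (induction n) (auto simp: XD)
  have S0D: "sq.S0 v \<in> D \<and> A (sq.S0 v) = sq.S0 (A v)" if v: "v \<in> D" for v
  proof -
    have eq: "cinner (sq.S0 v) (A u) = cinner (sq.S0 (A v)) u" if u: "u \<in> D" for u
    proof -
      have "cinner (sq.S0 v) (A u) = (\<Sum>n. cinner (acoef n *\<^sub>R (sq.X ^^ n) v) (A u))"
        by (rule sq.cinner_S0_left)
      also have "\<dots> = (\<Sum>n. cinner (acoef n *\<^sub>R (sq.X ^^ n) (A v)) u)"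
      proof -
        have "cinner ((sq.X ^^ n) v) (A u) = cinner ((sq.X ^^ n) (A v)) u" for n
          using Asym[OF conjunct1[OF XnD[OF v, of n]] u] conjunct2[OF XnD[OF v, of n]] by simp
        then show ?thesis by (simp add: cinner_scaleR_left)
      qed
      also have "\<dots> = cinner (sq.S0 (A v)) u"
        by (rule sq.cinner_S0_left[symmetric])
      finally show ?thesis .
    qed
    then have "sq.S0 v \<in> adjoint_dom D A" unfolding adjoint_dom_def by blast
    then have S0vD: "sq.S0 v \<in> D" using Aadj by blast
    have "A (sq.S0 v) - sq.S0 (A v) = 0"
    proof (rule density_zero[OF Ddense])
      fix u assume u: "u \<in> D"
      show "cinner (A (sq.S0 v) - sq.S0 (A v)) u = 0"
        using Asym[OF S0vD u] eq[OF u] by (simp add: cinner_diff_left)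
    qed
    then show ?thesis using S0vD by simp
  qed
  have SD: "?S v \<in> D \<and> A (?S v) = ?S (A v)" if v: "v \<in> D" for v
    using S0D[OF v] by (simp add: sq.Sq_def csubspace_scaleR[OF Dsub] clinear_on_scaleR[OF Alin])
  have iff: "\<psi> \<in> conj_dom G D \<longleftrightarrow> \<psi> \<in> D"
  proof
    assume "\<psi> \<in> conj_dom G D"
    then have "Si \<psi> \<in> D" using DB by simp
    then show "\<psi> \<in> D" using SD SSi by metis
  next
    assume "\<psi> \<in> D"
    then have "Si (Si \<psi>) \<in> D" using SiD[of "Si \<psi>"] SSi by simp
    then have "Si \<psi> \<in> D" using SD[of "Si (Si \<psi>)"] SSi by simp
    then show "\<psi> \<in> conj_dom G D" using DB by simp
  qed
  have "conj_op G A \<psi> = A \<psi>" if "\<psi> \<in> D"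
  proof -
    have "Si \<psi> \<in> D" using iff that DB by simp
    then show ?thesis using SD[of "Si \<psi>"] SSi B by simp
  qed
  then show ?thesis using iff by simp
qed

end
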